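(* Let $n\geq 2$ and let $(A,\cdot,[\cdot,\ldots,\cdot])$ be a simple transposed Poisson $n$-Lie algebra. Then there is no nonzero proper subspace $I\subsetneq A$ such that $[I,A,\ldots,A]\subseteq I$ and $[A\cdot I,A,\ldots,A]\subseteq I$ (i.e. $A$ contains no nonzero quasi-ideals).
   Context: An $n$-Lie algebra is a vector space $L$ with an $n$-linear skew-symmetric bracket satisfying $[[x_1,\ldots,x_n],y_2,\ldots,y_n]=\sum_{i=1}^n[x_1,\ldots,x_{i-1},[x_i,y_2,\ldots,y_n],x_{i+1},\ldots,x_n]$. A transposed Poisson $n$-Lie algebra (over $\mathbb{C}$) is a triple $(A,\cdot,[\cdot,\ldots,\cdot])$ where $(A,\cdot)$ is commutative associative, $(A,[\cdot,\ldots,\cdot])$ is an $n$-Lie algebra, and $n\,h\,[a_1,\ldots,a_n]=\sum_{i=1}^n[a_1,\ldots,h a_i,\ldots,a_n]$ for all $h,a_i\in A$. An ideal of $(A,\cdot,[\cdot,\ldots,\cdot])$ is a subspace $J$ with $A\cdot J\subseteq J$ and $[J,A,\ldots,A]\subseteq J$; the algebra is simple if $[A,\ldots,A]\neq 0$ and its only ideals are $0$ and $A$. Here $[I,A,\ldots,A]$ denotes the span of all $[u,a_2,\ldots,a_n]$ with $u\in I$, $a_k\in A$, and $A\cdot I$ the span of all products $au$ with $a\in A,u\in I$. *)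

theory Defs
  imports Complex_Main
begin

text \<open>An n-ary bracket is a function br on lists; only lists of length n matter.\<close>

definition multilinear_br :: "nat \<Rightarrow> (complex \<Rightarrow> 'a::ab_group_add \<Rightarrow> 'a) \<Rightarrow> ('a list \<Rightarrow> 'a) \<Rightarrow> bool" where
  "multilinear_br n smul br \<longleftrightarrow>
     (\<forall>xs i x y c. length xs = n \<and> i < n \<longrightarrow>
        br (xs[i := x + y]) = br (xs[i := x]) + br (xs[i := y]) \<and>
        br (xs[i := smul c x]) = smul c (br (xs[i := x])))"

definition skew_br :: "nat \<Rightarrow> ('a::ab_group_add list \<Rightarrow> 'a) \<Rightarrow> bool" where
  "skew_br n br \<longleftrightarrow>
     (\<forall>xs i j. length xs = n \<and> i < j \<and> j < n \<longrightarrow>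
        br (xs[i := xs ! j, j := xs ! i]) = - br xs)"

definition filippov :: "nat \<Rightarrow> ('a::ab_group_add list \<Rightarrow> 'a) \<Rightarrow> bool" where
  "filippov n br \<longleftrightarrow>
     (\<forall>xs ys. length xs = n \<and> length ys = n - 1 \<longrightarrow>
        br (br xs # ys) = (\<Sum>i<n. br (xs[i := br (xs ! i # ys)])))"

definition n_Lie :: "nat \<Rightarrow> (complex \<Rightarrow> 'a::ab_group_add \<Rightarrow> 'a) \<Rightarrow> ('a list \<Rightarrow> 'a) \<Rightarrow> bool" where
  "n_Lie n smul br \<longleftrightarrow> multilinear_br n smul br \<and> skew_br n br \<and> filippov n br"

definition comm_assoc_alg :: "(complex \<Rightarrow> 'a::ab_group_add \<Rightarrow> 'a) \<Rightarrow> ('a \<Rightarrow> 'a \<Rightarrow> 'a) \<Rightarrow> bool" where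
  "comm_assoc_alg smul mult \<longleftrightarrow>
     (\<forall>x y z. mult (x + y) z = mult x z + mult y z) \<and>
     (\<forall>c x y. mult (smul c x) y = smul c (mult x y)) \<and>
     (\<forall>x y. mult x y = mult y x) \<and>
     (\<forall>x y z. mult (mult x y) z = mult x (mult y z))"

definition transposed_Poisson_nLie ::
  "nat \<Rightarrow> (complex \<Rightarrow> 'a::ab_group_add \<Rightarrow> 'a) \<Rightarrow> ('a \<Rightarrow> 'a \<Rightarrow> 'a) \<Rightarrow> ('a list \<Rightarrow> 'a) \<Rightarrow> bool" where
  "transposed_Poisson_nLie n smul mult br \<longleftrightarrow>
     module smul \<and> comm_assoc_alg smul mult \<and> n_Lie n smul br \<and>
     (\<forall>h xs. length xs = n \<longrightarrow>
        smul (of_nat n) (mult h (br xs)) = (\<Sum>i<n. br (xs[i := mult h (xs ! i)])))"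

definition tp_ideal ::
  "nat \<Rightarrow> (complex \<Rightarrow> 'a::ab_group_add \<Rightarrow> 'a) \<Rightarrow> ('a \<Rightarrow> 'a \<Rightarrow> 'a) \<Rightarrow> ('a list \<Rightarrow> 'a) \<Rightarrow> 'a set \<Rightarrow> bool" where
  "tp_ideal n smul mult br J \<longleftrightarrow>
     module.subspace smul J \<and>
     (\<forall>a u. u \<in> J \<longrightarrow> mult a u \<in> J) \<and>
     (\<forall>u as. u \<in> J \<and> length as = n - 1 \<longrightarrow> br (u # as) \<in> J)"

definition simple_tp ::
  "nat \<Rightarrow> (complex \<Rightarrow> 'a::ab_group_add \<Rightarrow> 'a) \<Rightarrow> ('a \<Rightarrow> 'a \<Rightarrow> 'a) \<Rightarrow> ('a list \<Rightarrow> 'a) \<Rightarrow> bool" where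
  "simple_tp n smul mult br \<longleftrightarrow>
     (\<exists>xs. length xs = n \<and> br xs \<noteq> 0) \<and>
     (\<forall>J. tp_ideal n smul mult br J \<longrightarrow> J = {0} \<or> J = UNIV)"

end

theory Submission
  imports Defs
begin

lemma tp_facts:
  assumes "transposed_Poisson_nLie n smul mult br"
  shows "module smul" "comm_assoc_alg smul mult" "multilinear_br n smul br"
   "\<And>h xs. length xs = n \<Longrightarrow>
        smul (of_nat n) (mult h (br xs)) = (\<Sum>i<n. br (xs[i := mult h (xs ! i)]))"
  using assms unfolding transposed_Poisson_nLie_def n_Lie_def by auto

lemma mult_facts:
  assumes "comm_assoc_alg smul mult" "module smul"
  shows "mult h 0 = 0" "mult h (x + y) = mult h x + mult h y"
    "mult h (smul c x) = smul c (mult h x)" "mult g (mult h x) = mult (mult g h) x"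
proof -
  have a: "\<And>x y z. mult (x + y) z = mult x z + mult y z"
    and s: "\<And>c x y. mult (smul c x) y = smul c (mult x y)"
    and c: "\<And>x y. mult x y = mult y x"
    and as: "\<And>x y z. mult (mult x y) z = mult x (mult y z)"
    using assms(1) unfolding comm_assoc_alg_def by auto
  have "mult 0 h = mult 0 h + mult 0 h" using a[of 0 0 h] by simp
  then have "mult 0 h = 0" by simp
  then show "mult h 0 = 0" using c by metis
  show "mult h (x + y) = mult h x + mult h y" using a c by metis
  show "mult h (smul c x) = smul c (mult h x)" using s c by metis
  show "mult g (mult h x) = mult (mult g h) x" using as by metis
qed

lemma br_first:
  assumes "multilinear_br n smul br" "module smul" "length as = n - 1" "n \<ge> 1"
  shows "br ((x + y) # as) = br (x # as) + br (y # as)"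
    "br (smul c x # as) = smul c (br (x # as))"
    "br (0 # as) = 0"
proof -
  have l: "length (x # as) = n" "0 < n" using assms by auto
  have ml: "\<And>xs i x y c. length xs = n \<Longrightarrow> i < n \<Longrightarrow>
        br (xs[i := x + y]) = br (xs[i := x]) + br (xs[i := y]) \<and>
        br (xs[i := smul c x]) = smul c (br (xs[i := x]))"
    using assms(1) unfolding multilinear_br_def by blast
  show 1: "\<And>x y. br ((x + y) # as) = br (x # as) + br (y # as)"
  proof -
    fix x y
    show "br ((x + y) # as) = br (x # as) + br (y # as)"
      using ml[of "x # as" 0 x y] l by simp
  qed
  show "br (smul c x # as) = smul c (br (x # as))"
    using ml[of "x # as" 0 x x c] l by simp
  have "br ((0+0) # as) = br (0 # as) + br (0 # as)" by (rule 1)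
  then show "br (0 # as) = 0" by simp
qed

lemma key_eq:
  assumes "transposed_Poisson_nLie n smul mult br" "length as = n - 1" "n \<ge> 1"
  shows "smul (of_nat n) (mult h (br (u # as))) =
     br (mult h u # as) + (\<Sum>i<n-1. br (u # as[i := mult h (as ! i)]))"
proof -
  have n: "n = Suc (n - 1)" using assms by simp
  have "smul (of_nat n) (mult h (br (u # as))) = (\<Sum>i<n. br ((u#as)[i := mult h ((u#as) ! i)]))"
    using tp_facts(4)[OF assms(1)] assms by simp
  also have "\<dots> = (\<Sum>i<Suc (n-1). br ((u#as)[i := mult h ((u#as) ! i)]))" using n by simp
  also have "\<dots> = br (mult h u # as) + (\<Sum>i<n-1. br (u # as[i := mult h (as ! i)]))"
    by (subst sum.lessThan_Suc_shift) simp
  finally show ?thesis .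
qed

lemma key_mem:
  assumes "transposed_Poisson_nLie n smul mult br" "length as = n - 1" "n \<ge> 1"
    and S: "module.subspace smul S"
    and h1: "br (mult h u # as) \<in> S"
    and h2: "\<And>i. i < n - 1 \<Longrightarrow> br (u # as[i := mult h (as ! i)]) \<in> S"
  shows "mult h (br (u # as)) \<in> S"
proof -
  have m: "module smul" using tp_facts(1)[OF assms(1)] .
  have "smul (of_nat n) (mult h (br (u # as))) \<in> S"
    unfolding key_eq[OF assms(1-3)]
    by (intro module.subspace_add[OF m S] h1 module.subspace_sum[OF m S] h2) simp
  then have "smul (1 / of_nat n) (smul (of_nat n) (mult h (br (u # as)))) \<in> S"
    by (rule module.subspace_scale[OF m S])
  moreover have "(1 / of_nat n) * (of_nat n :: complex) = 1" using assms(3) by simp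
  ultimately show ?thesis using module.scale_scale[OF m] module.scale_one[OF m] by metis
qed

theorem mainTheorem4:
  fixes n :: nat
    and smul :: "complex \<Rightarrow> 'a::ab_group_add \<Rightarrow> 'a"
    and mult :: "'a \<Rightarrow> 'a \<Rightarrow> 'a"
    and br :: "'a list \<Rightarrow> 'a"
  assumes "n \<ge> 2"
    and "transposed_Poisson_nLie n smul mult br"
    and "simple_tp n smul mult br"
  shows "\<not> (\<exists>I. module.subspace smul I \<and> I \<noteq> {0} \<and> I \<noteq> UNIV \<and>
              (\<forall>u as. u \<in> I \<and> length as = n - 1 \<longrightarrow> br (u # as) \<in> I) \<and>
              (\<forall>a u as. u \<in> I \<and> length as = n - 1 \<longrightarrow> br (mult a u # as) \<in> I))"
proof
  assume "\<exists>I. module.subspace smul I \<and> I \<noteq> {0} \<and> I \<noteq> UNIV \<and>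
              (\<forall>u as. u \<in> I \<and> length as = n - 1 \<longrightarrow> br (u # as) \<in> I) \<and>
              (\<forall>a u as. u \<in> I \<and> length as = n - 1 \<longrightarrow> br (mult a u # as) \<in> I)"
  then obtain I where IS: "module.subspace smul I" and I0: "I \<noteq> {0}" and IU: "I \<noteq> UNIV"
    and Ib: "\<And>u as. u \<in> I \<Longrightarrow> length as = n - 1 \<Longrightarrow> br (u # as) \<in> I"
    and Iq: "\<And>a u as. u \<in> I \<Longrightarrow> length as = n - 1 \<Longrightarrow> br (mult a u # as) \<in> I" by blast
  have tp: "transposed_Poisson_nLie n smul mult br" by fact
  have n1: "n \<ge> 1" using assms(1) by simp
  note m = tp_facts(1)[OF tp]
  note ca = tp_facts(2)[OF tp]
  note ml = tp_facts(3)[OF tp]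
  note mf = mult_facts[OF ca m]
  note bf = br_first[OF ml m _ n1]
  have simp_ideal: "\<And>J. tp_ideal n smul mult br J \<Longrightarrow> J = {0} \<or> J = UNIV"
    using assms(3) unfolding simple_tp_def by blast
  obtain xs where xs: "length xs = n" "br xs \<noteq> 0"
    using assms(3) unfolding simple_tp_def by blast
  define J where "J = {x \<in> I. \<forall>h. mult h x \<in> I}"
  have "tp_ideal n smul mult br J"
    unfolding tp_ideal_def
  proof (intro conjI allI impI)
    show "module.subspace smul J"
      unfolding module.subspace_def[OF m] J_def
      using module.subspace_0[OF m IS] module.subspace_add[OF m IS] module.subspace_scale[OF m IS]
      by (auto simp: mf)
  next
    fix a u assume "u \<in> J" then show "mult a u \<in> J"
      unfolding J_def by (auto simp: mf)
  next
    fix u :: 'a and as :: "'a list" assume h: "u \<in> J \<and> length as = n - 1"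
    then have uI: "u \<in> I" and hI: "\<And>h. mult h u \<in> I" and la: "length as = n - 1"
      unfolding J_def by auto
    show "br (u # as) \<in> J" unfolding J_def
    proof (intro CollectI conjI allI)
      show "br (u # as) \<in> I" using Ib uI la .
      fix h show "mult h (br (u # as)) \<in> I"
        by (rule key_mem[OF tp la n1 IS Ib[OF hI la]]) (simp add: Ib uI la)
    qed
  qed
  then have J0: "J = {0}"
  proof -
    assume "tp_ideal n smul mult br J"
    then have "J = {0} \<or> J = UNIV" by (rule simp_ideal)
    moreover have "J \<noteq> UNIV" using IU unfolding J_def by auto
    ultimately show ?thesis by blast
  qed
  have brI0: "br (u # as) = 0" if "u \<in> I" "length as = n - 1" for u as
  proof -
    have "br (u # as) \<in> J" unfolding J_def
    proof (intro CollectI conjI allI)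
      show "br (u # as) \<in> I" using Ib that .
      fix h show "mult h (br (u # as)) \<in> I"
        by (rule key_mem[OF tp that(2) n1 IS Iq[OF that]]) (simp add: Ib that)
    qed
    then show ?thesis using J0 by simp
  qed
  define Z where "Z = {z. \<forall>as. length as = n - 1 \<longrightarrow> br (z # as) = 0}"
  have "tp_ideal n smul mult br Z"
    unfolding tp_ideal_def
  proof (intro conjI allI impI)
    show "module.subspace smul Z"
      unfolding module.subspace_def[OF m] Z_def
      by (auto simp: bf module.scale_zero_right[OF m])
  next
    fix a u assume u: "u \<in> Z"
    show "mult a u \<in> Z" unfolding Z_def
    proof (intro CollectI allI impI)
      fix as :: "'a list" assume la: "length as = n - 1"
      have "smul (of_nat n) (mult a (br (u # as))) =
         br (mult a u # as) + (\<Sum>i<n-1. br (u # as[i := mult a (as ! i)]))"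
        by (rule key_eq[OF tp la n1])
      moreover have "br (u # as) = 0" using u la unfolding Z_def by auto
      moreover have "\<And>i. br (u # as[i := mult a (as ! i)]) = 0" using u la unfolding Z_def by auto
      ultimately show "br (mult a u # as) = 0" by (simp add: mf module.scale_zero_right[OF m])
    qed
  next
    fix u :: 'a and as :: "'a list" assume "u \<in> Z \<and> length as = n - 1"
    then show "br (u # as) \<in> Z" unfolding Z_def by (auto simp: bf)
  qed
  then have "Z = {0} \<or> Z = UNIV" by (rule simp_ideal)
  moreover have "Z \<noteq> UNIV"
  proof
    assume "Z = UNIV"
    then have "hd xs \<in> Z" by simp
    moreover have xe: "xs = hd xs # tl xs" using xs(1) n1 by (cases xs) auto
    moreover have "length (tl xs) = n - 1" using xs(1) by simp
    ultimately have "br (hd xs # tl xs) = 0" unfolding Z_def by blast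
    then have "br xs = 0" using \<open>xs = hd xs # tl xs\<close> by simp
    then show False using xs(2) by simp
  qed
  moreover have "I \<subseteq> Z" unfolding Z_def using brI0 by auto
  ultimately have "I \<subseteq> {0}" by blast
  then show False using I0 module.subspace_0[OF m IS] by blast
qed

end
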